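(* Let $(Q_{n,\omega},\omega,Q,\mu_n,(a,b))$ be one of the three classical families below, and let $n\geq 1$. Let $t_1<\dots<t_n$ be the zeros of $Q_{n,\omega}$ in $(a,b)$. Then $$\int_a^b |Q_{n,\omega}(t)|\,\omega(t)\,dt = 2\,\frac{\mu_{n-1}}{|\mu_n|}\sum_{j=1}^{n}(-1)^{j+1}\,\omega(t_j)\,Q(t_j)\,Q_{n-1,\omega Q}(t_j).$$
   Context: The classical orthogonal polynomials are given by Rodrigues' formula $Q_{n,\omega}(t)=\frac{1}{\omega(t)\mu_n}\frac{d^n}{dt^n}(\omega Q^n)(t)$, $t\in(a,b)$, for the following data: (Laguerre) $Q_{n,\omega}=L_n^{(\alpha)}$, $\mu_n=n!$, $\omega(t)=t^{\alpha}e^{-t}$, $Q(t)=t$, $(a,b)=(0,\infty)$, with $\alpha>-1$; (Hermite) $Q_{n,\omega}=H_n$, $\mu_n=(-1)^n$, $\omega(t)=e^{-t^2}$, $Q(t)=1$, $(a,b)=(-\infty,\infty)$; (Jacobi) $Q_{n,\omega}=P_n^{(\alpha,\beta)}$, $\mu_n=(-1)^n2^nn!$, $\omega(t)=(1-t)^{\alpha}(1+t)^{\beta}$, $Q(t)=1-t^2$, $(a,b)=(-1,1)$, with $\alpha,\beta>-1$. Correspondingly, $Q_{n-1,\omega Q}$ denotes the function given by the same Rodrigues formula with weight $\omega Q$ in place of $\omega$, i.e. $Q_{n-1,\omega Q}(t)=\frac{1}{\omega(t)Q(t)\mu_{n-1}}\frac{d^{n-1}}{dt^{n-1}}(\omega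 Q\cdot Q^{n-1})(t)$. The zeros of $Q_{n,\omega}$ are real, simple and lie in $(a,b)$. *)

theory Defs
  imports "HOL-Analysis.Analysis"
begin

datatype cfamily = Laguerre real | Hermite | Jacobi real real

fun cf_valid :: "cfamily \<Rightarrow> bool" where
  "cf_valid (Laguerre \<alpha>) = (\<alpha> > -1)"
| "cf_valid Hermite = True"
| "cf_valid (Jacobi \<alpha> \<beta>) = (\<alpha> > -1 \<and> \<beta> > -1)"

fun cf_weight :: "cfamily \<Rightarrow> real \<Rightarrow> real" where
  "cf_weight (Laguerre \<alpha>) t = t powr \<alpha> * exp (- t)"
| "cf_weight Hermite t = exp (- (t ^ 2))"
| "cf_weight (Jacobi \<alpha> \<beta>) t = (1 - t) powr \<alpha> * (1 + t) powr \<beta>"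

fun cf_Q :: "cfamily \<Rightarrow> real \<Rightarrow> real" where
  "cf_Q (Laguerre \<alpha>) t = t"
| "cf_Q Hermite t = 1"
| "cf_Q (Jacobi \<alpha> \<beta>) t = 1 - t ^ 2"

fun cf_mu :: "cfamily \<Rightarrow> nat \<Rightarrow> real" where
  "cf_mu (Laguerre \<alpha>) n = fact n"
| "cf_mu Hermite n = (-1) ^ n"
| "cf_mu (Jacobi \<alpha> \<beta>) n = (-1) ^ n * 2 ^ n * fact n"

fun cf_dom :: "cfamily \<Rightarrow> real set" where
  "cf_dom (Laguerre \<alpha>) = {0<..}"
| "cf_dom Hermite = UNIV"
| "cf_dom (Jacobi \<alpha> \<beta>) = {-1<..<1}"

definition rodrigues :: "(real \<Rightarrow> real) \<Rightarrow> (real \<Rightarrow> real) \<Rightarrow> real \<Rightarrow> nat \<Rightarrow> real \<Rightarrow> real" where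
  "rodrigues w Q mu n t = (deriv ^^ n) (\<lambda>s. w s * Q s ^ n) t / (w t * mu)"

definition cf_poly :: "cfamily \<Rightarrow> nat \<Rightarrow> real \<Rightarrow> real" where
  "cf_poly F n = rodrigues (cf_weight F) (cf_Q F) (cf_mu F n) n"

definition cf_poly_shift :: "cfamily \<Rightarrow> nat \<Rightarrow> real \<Rightarrow> real" where
  "cf_poly_shift F n = rodrigues (\<lambda>s. cf_weight F s * cf_Q F s) (cf_Q F) (cf_mu F n) n"

end

theory Submission
  imports Defs "HOL-Analysis.Analysis" "HOL-Computational_Algebra.Polynomial" "HOL-Real_Asymp.Real_Asymp"
begin

lemma poly_roots_factor:
  fixes p :: "real poly"
  assumes "finite S" "\<forall>x\<in>S. poly p x = 0" "card S = degree p" "p \<noteq> 0"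
  shows "poly p t = lead_coeff p * (\<Prod>x\<in>S. (t - x))"
  using assms
proof (induction S arbitrary: p rule: finite_induct)
  case empty
  then obtain c where "p = [:c:]" by (metis degree_eq_zeroE card.empty)
  then show ?case by simp
next
  case (insert x S)
  have "[:-x,1:] dvd p" using insert.prems poly_eq_0_iff_dvd by auto
  then obtain r where r: "p = [:-x,1:] * r" by (auto elim: dvdE)
  have r0: "r \<noteq> 0" using insert.prems r by auto
  have "degree ([:-x,1:] * r) = degree [:-x,1:] + degree r"
    by (rule degree_mult_eq) (use r0 in auto)
  then have dr: "degree p = Suc (degree r)" using r by simp
  have "card S = degree r" using insert dr by simp
  moreover have "\<forall>y\<in>S. poly r y = 0"
  proof
    fix y assume "y \<in> S"
    then have "y \<noteq> x" "poly p y = 0" using insert by auto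
    then show "poly r y = 0" using r by simp
  qed
  ultimately have "poly r t = lead_coeff r * (\<Prod>x\<in>S. (t - x))" using insert.IH r0 by blast
  moreover have "lead_coeff p = lead_coeff r" unfolding r lead_coeff_mult by simp
  moreover have "poly p t = (t - x) * poly r t" unfolding r by (simp add: algebra_simps)
  ultimately show ?case using insert(1,2) by (simp only: prod.insert) (simp add: algebra_simps)
qed

lemma telescope_alt:
  fixes h :: "nat \<Rightarrow> real"
  shows "(\<Sum>k=0..n. (-1)^k * (h (Suc k) - h k)) = (-1)^n * h (Suc n) - h 0 + 2 * (\<Sum>j=1..n. (-1)^(j+1) * h j)"
proof (induction n)
  case 0 then show ?case by simp
next
  case (Suc n)
  have "(\<Sum>k=0..Suc n. (-1)^k * (h (Suc k) - h k)) = (\<Sum>k=0..n. (-1)^k * (h (Suc k) - h k)) + (-1)^(Suc n) * (h (Suc (Suc n)) - h (Suc n))"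
    by simp
  also have "... = (-1)^(Suc n) * h (Suc (Suc n)) - h 0 + 2 * ((\<Sum>j=1..n. (-1)^(j+1) * h j) + (-1)^(Suc n + 1) * h (Suc n))"
    unfolding Suc by (simp add: algebra_simps)
  also have "... = (-1)^(Suc n) * h (Suc (Suc n)) - h 0 + 2 * (\<Sum>j=1..Suc n. (-1)^(j+1) * h j)"
    by simp
  finally show ?case .
qed

lemma isCont_tendsto_right_left:
  fixes H :: "real \<Rightarrow> real"
  assumes "isCont H x"
  shows "((H \<circ> real_of_ereal) \<longlongrightarrow> H x) (at_right (ereal x))"
    "((H \<circ> real_of_ereal) \<longlongrightarrow> H x) (at_left (ereal x))"
  unfolding ereal_tendsto_simps1 using assms
  by (auto simp: isCont_def intro: tendsto_mono[OF at_le])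

lemma integral_abs_alternating:
  fixes a b :: ereal and p :: "real poly" and w H :: "real \<Rightarrow> real" and ts :: "nat \<Rightarrow> real"
  assumes ab: "a < b" and n: "n \<ge> 1"
    and deg: "degree p = n" and lc: "(-1)^n * lead_coeff p > 0"
    and mono: "strict_mono_on {1..n} ts"
    and zeros: "{t \<in> einterval a b. poly p t = 0} = ts ` {1..n}"
    and wpos: "\<And>t. t \<in> einterval a b \<Longrightarrow> w t > 0"
    and wcont: "\<And>t. t \<in> einterval a b \<Longrightarrow> isCont w t"
    and Hder: "\<And>t. t \<in> einterval a b \<Longrightarrow> (H has_real_derivative w t * poly p t) (at t)"
    and Ha: "((H \<circ> real_of_ereal) \<longlongrightarrow> 0) (at_right a)"
    and Hb: "((H \<circ> real_of_ereal) \<longlongrightarrow> 0) (at_left b)"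
  shows "(LBINT t:einterval a b. \<bar>poly p t\<bar> * w t) = 2 * (\<Sum>j=1..n. (-1)^(j+1) * H (ts j))"
proof -
  let ?S = "einterval a b"
  have tsS: "ts j \<in> ?S" if "j \<in> {1..n}" for j using zeros that by blast
  have inj: "inj_on ts {1..n}" using mono strict_mono_on_imp_inj_on by blast
  have p0: "p \<noteq> 0" using deg n by auto
  have fact: "poly p t = lead_coeff p * (\<Prod>j\<in>{1..n}. (t - ts j))" for t
  proof -
    have "poly p t = lead_coeff p * (\<Prod>x\<in>ts`{1..n}. (t - x))"
      by (rule poly_roots_factor) (use zeros inj deg p0 in \<open>auto simp: card_image\<close>)
    also have "... = lead_coeff p * (\<Prod>j\<in>{1..n}. (t - ts j))" by (subst prod.reindex[OF inj]) (simp add: o_def)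
    finally show ?thesis .
  qed
  define e where "e k = (if k = 0 then a else if k \<le> n then ereal (ts k) else b)" for k
  have e_less: "e i < e j" if ij: "i < j" "j \<le> Suc n" for i j
  proof -
    consider "i = 0" "j \<le> n" | "i = 0" "j = Suc n" | "i > 0" "j \<le> n" | "i > 0" "j = Suc n"
      using ij by linarith
    then show ?thesis
    proof cases
      case 1 then show ?thesis using tsS[of j] ij by (auto simp: e_def einterval_def)
    next
      case 2 then show ?thesis using ab n by (auto simp: e_def)
    next
      case 3 then show ?thesis using mono ij by (auto simp: e_def strict_mono_on_def)
    next
      case 4 then show ?thesis using tsS[of i] ij by (auto simp: e_def einterval_def)
    qed
  qed
  have e0: "e 0 = a" and en: "e (Suc n) = b" by (auto simp: e_def)
  have e_ge: "a \<le> e k" if "k \<le> Suc n" for k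
  proof (cases "k = 0")
    case True then show ?thesis using e0 by simp
  next
    case False then show ?thesis using e_less[of 0 k] that e0 by simp
  qed
  have e_le: "e k \<le> b" if "k \<le> Suc n" for k
  proof (cases "k = Suc n")
    case True then show ?thesis using en by simp
  next
    case False then show ?thesis using e_less[of k "Suc n"] that en by simp
  qed
  define P where "P k = einterval (e k) (e (Suc k))" for k
  have PS: "P k \<subseteq> ?S" if "k \<le> n" for k
    using e_ge[of k] e_le[of "Suc k"] that unfolding P_def einterval_def by (auto intro: order.strict_trans1 order.strict_trans2)
  have sign: "(-1)^k * poly p t > 0" if k: "k \<le> n" and t: "t \<in> P k" for k t
  proof -
    have lo: "ts j < t" if "j \<in> {1..k}" for j
    proof -
      have "e j \<le> e k" using e_less[of j k] that k by (cases "j = k") auto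
      moreover have "e j = ereal (ts j)" using that k by (auto simp: e_def)
      ultimately have "ereal (ts j) \<le> e k" by simp
      moreover have "e k < ereal t" using t unfolding P_def einterval_def by simp
      ultimately have "ereal (ts j) < ereal t" by (rule order.strict_trans1)
      then show ?thesis by simp
    qed
    have hi: "t < ts j" if "j \<in> {Suc k..n}" for j
    proof -
      have "e (Suc k) \<le> e j" using e_less[of "Suc k" j] that k by (cases "j = Suc k") auto
      moreover have "e j = ereal (ts j)" using that k by (auto simp: e_def)
      ultimately have "e (Suc k) \<le> ereal (ts j)" by simp
      moreover have "ereal t < e (Suc k)" using t unfolding P_def einterval_def by simp
      ultimately have "ereal t < ereal (ts j)" by (meson order.strict_trans2)
      then show ?thesis by simp
    qed
    have split: "{1..n} = {1..k} \<union> {Suc k..n}" using k by auto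
    have "(\<Prod>j\<in>{1..n}. (t - ts j)) = (\<Prod>j\<in>{1..k}. (t - ts j)) * (\<Prod>j\<in>{Suc k..n}. (t - ts j))"
      unfolding split by (rule prod.union_disjoint) auto
    also have "(\<Prod>j\<in>{Suc k..n}. (t - ts j)) = (\<Prod>j\<in>{Suc k..n}. (-1) * (ts j - t))"
      by (rule prod.cong) auto
    also have "... = (-1)^(n-k) * (\<Prod>j\<in>{Suc k..n}. (ts j - t))"
      unfolding prod.distrib by simp
    finally have eq: "(\<Prod>j\<in>{1..n}. (t - ts j)) = (-1)^(n-k) * ((\<Prod>j\<in>{1..k}. (t - ts j)) * (\<Prod>j\<in>{Suc k..n}. (ts j - t)))"
      by simp
    have pos: "(\<Prod>j\<in>{1..k}. (t - ts j)) * (\<Prod>j\<in>{Suc k..n}. (ts j - t)) > 0"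
      using lo hi by (intro mult_pos_pos prod_pos) auto
    have sq: "(-1::real)^k * (-1)^(n-k) = (-1)^n" using k by (simp add: power_add[symmetric])
    have "(-1)^k * poly p t = ((-1)^k * (-1)^(n-k)) * lead_coeff p * ((\<Prod>j\<in>{1..k}. (t - ts j)) * (\<Prod>j\<in>{Suc k..n}. (ts j - t)))"
      unfolding fact eq by (simp add: algebra_simps)
    also have "... = ((-1)^n * lead_coeff p) * ((\<Prod>j\<in>{1..k}. (t - ts j)) * (\<Prod>j\<in>{Suc k..n}. (ts j - t)))"
      unfolding sq by simp
    finally show ?thesis using lc pos by simp
  qed
  define g where "g t = \<bar>poly p t\<bar> * w t" for t
  define h where "h k = (if k = 0 \<or> k = Suc n then 0 else H (ts k))" for k
  have Hcont: "isCont H t" if "t \<in> ?S" for t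
    using Hder[OF that] by (rule DERIV_isCont)
  have limA: "((H \<circ> real_of_ereal) \<longlongrightarrow> h k) (at_right (e k))" if "k \<le> n" for k
  proof (cases "k = 0")
    case True then show ?thesis using Ha e0 by (simp add: h_def)
  next
    case False
    then have "e k = ereal (ts k)" "h k = H (ts k)" "ts k \<in> ?S" using that tsS by (auto simp: e_def h_def)
    then show ?thesis using isCont_tendsto_right_left(1)[OF Hcont] by simp
  qed
  have limB: "((H \<circ> real_of_ereal) \<longlongrightarrow> h (Suc k)) (at_left (e (Suc k)))" if "k \<le> n" for k
  proof (cases "k = n")
    case True then show ?thesis using Hb en by (simp add: h_def)
  next
    case False
    then have "e (Suc k) = ereal (ts (Suc k))" "h (Suc k) = H (ts (Suc k))" "ts (Suc k) \<in> ?S" using that tsS by (auto simp: e_def h_def)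
    then show ?thesis using isCont_tendsto_right_left(2)[OF Hcont] by simp
  qed
  have piece: "set_integrable lborel (P k) g \<and> (LBINT t:P k. g t) = (-1)^k * (h (Suc k) - h k)"
    if k: "k \<le> n" for k
  proof -
    let ?f = "\<lambda>t. (-1)^k * (w t * poly p t)"
    let ?F = "\<lambda>t. (-1)^k * H t"
    have inP: "t \<in> P k" if "e k < ereal t" "ereal t < e (Suc k)" for t
      using that by (simp add: P_def einterval_def)
    have lt: "e k < e (Suc k)" using e_less k by simp
    have A: "((?F \<circ> real_of_ereal) \<longlongrightarrow> (-1)^k * h k) (at_right (e k))"
      using tendsto_mult_left[OF limA[OF k], of "(-1)^k"] by (simp add: o_def)
    have B: "((?F \<circ> real_of_ereal) \<longlongrightarrow> (-1)^k * h (Suc k)) (at_left (e (Suc k)))"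
      using tendsto_mult_left[OF limB[OF k], of "(-1)^k"] by (simp add: o_def)
    have D: "DERIV ?F t :> ?f t" if "e k < ereal t" "ereal t < e (Suc k)" for t
      using Hder[of t] inP[OF that] PS[OF k] by (auto intro!: derivative_eq_intros)
    have C: "isCont ?f t" if "e k < ereal t" "ereal t < e (Suc k)" for t
      using wcont[of t] inP[OF that] PS[OF k] by (auto intro!: continuous_intros)
    have N: "AE t in lborel. e k < ereal t \<longrightarrow> ereal t < e (Suc k) \<longrightarrow> 0 \<le> ?f t"
    proof (rule AE_I2, intro impI)
      fix t assume "e k < ereal t" "ereal t < e (Suc k)"
      then have "t \<in> P k" "t \<in> ?S" using inP PS[OF k] by auto
      then have "(-1)^k * poly p t > 0" "w t > 0" using sign[OF k] wpos by auto
      then show "0 \<le> ?f t" by (metis mult.left_commute mult_pos_pos less_imp_le)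
    qed
    note FTC = interval_integral_FTC_nonneg[OF lt D C N A B]
    have fg: "?f t = g t" if "t \<in> P k" for t
    proof -
      have "(-1)^k * poly p t > 0" using sign[OF k that] .
      moreover have "\<bar>(-1::real)^k\<bar> = 1" by simp
      ultimately have "\<bar>poly p t\<bar> = (-1)^k * poly p t"
        by (metis abs_mult abs_of_pos mult_1)
      then show ?thesis by (simp add: g_def)
    qed
    have "set_integrable lborel (P k) g"
      using FTC(1) set_integrable_cong[of lborel lborel "P k" "P k" ?f g] fg P_def by simp
    moreover have "(LBINT t:P k. g t) = (LBINT t:P k. ?f t)"
      using fg by (intro set_lebesgue_integral_cong) (auto simp: P_def)
    moreover have "(LBINT t:P k. ?f t) = (-1)^k * (h (Suc k) - h k)"
    proof -
      have "e k \<le> e (Suc k)" using lt by simp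
      then have "(LBINT t:P k. ?f t) = (LBINT t=e k..e (Suc k). ?f t)"
        by (simp only: interval_lebesgue_integral_def P_def if_True)
      then show ?thesis using FTC(2) by (simp add: algebra_simps)
    qed
    ultimately show ?thesis by simp
  qed
  have decomp: "indicator ?S t * g t = (\<Sum>k\<in>{0..n}. indicator (P k) t * g t)" for t
  proof (cases "t \<in> ?S \<and> poly p t \<noteq> 0")
    case False
    then consider "g t = 0" | "t \<notin> ?S" by (auto simp: g_def)
    then show ?thesis
    proof cases
      case 1 then show ?thesis by simp
    next
      case 2
      then have "t \<notin> P k" if "k \<in> {0..n}" for k using PS[of k] that by auto
      then show ?thesis using 2 by (simp add: indicator_def)
    qed
  next
    case True
    then have tS: "t \<in> ?S" and pt: "poly p t \<noteq> 0" by auto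
    define J where "J = {k\<in>{0..n}. e k < ereal t}"
    have finJ: "finite J" by (simp add: J_def)
    have "0 \<in> J" using tS e0 by (simp add: J_def einterval_def)
    then have J0: "J \<noteq> {}" by auto
    define k0 where "k0 = Max J"
    have k0J: "k0 \<in> J" using Max_in[OF finJ J0] k0_def by simp
    have k0n: "k0 \<le> n" and ek0: "e k0 < ereal t" using k0J by (auto simp: J_def)
    have "ereal t < e (Suc k0)"
    proof (cases "k0 = n")
      case True then show ?thesis using en tS by (simp add: einterval_def)
    next
      case False
      then have "Suc k0 \<notin> J" using Max_ge[OF finJ] k0_def by fastforce
      then have "\<not> e (Suc k0) < ereal t" using False k0n by (simp add: J_def)
      moreover have "e (Suc k0) = ereal (ts (Suc k0))" using False k0n by (simp add: e_def)
      moreover have "ts (Suc k0) \<noteq> t"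
      proof
        assume "ts (Suc k0) = t"
        then have "t \<in> ts ` {1..n}" using False k0n by auto
        then show False using zeros pt by blast
      qed
      ultimately show ?thesis by auto
    qed
    then have tP: "t \<in> P k0" using ek0 by (simp add: P_def einterval_def)
    have uniq: "k = k0" if "k \<in> {0..n}" "t \<in> P k" for k
    proof -
      have "e k < ereal t" using that by (simp add: P_def einterval_def)
      then have "k \<in> J" using that by (simp add: J_def)
      then have "k \<le> k0" using Max_ge[OF finJ] k0_def by simp
      moreover have "\<not> k < k0"
      proof
        assume "k < k0"
        then have "e (Suc k) \<le> e k0" using e_less[of "Suc k" k0] k0n by (cases "Suc k = k0") auto
        moreover have "ereal t < e (Suc k)" using that by (simp add: P_def einterval_def)
        ultimately show False using ek0 by simp
      qed
      ultimately show ?thesis by simp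
    qed
    have "(\<Sum>k\<in>{0..n}. indicator (P k) t * g t) = (\<Sum>k\<in>{0..n}. if k = k0 then g t else 0)"
    proof (rule sum.cong)
      fix k assume k: "k \<in> {0..n}"
      show "indicator (P k) t * g t = (if k = k0 then g t else 0)"
      proof (cases "k = k0")
        case True then show ?thesis using tP by simp
      next
        case False then have "t \<notin> P k" using uniq k by blast
        then show ?thesis using False by simp
      qed
    qed simp
    also have "... = g t" using k0n by simp
    finally show ?thesis using tS by simp
  qed
  have "(LBINT t:?S. g t) = (\<integral>t. (\<Sum>k\<in>{0..n}. indicator (P k) t * g t) \<partial>lborel)"
  proof -
    have "(\<lambda>t. indicator ?S t *\<^sub>R g t) = (\<lambda>t. (\<Sum>k\<in>{0..n}. indicator (P k) t * g t))"
      by (rule ext) (simp only: real_scaleR_def decomp)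
    then show ?thesis unfolding set_lebesgue_integral_def by (simp only:)
  qed
  also have "... = (\<Sum>k\<in>{0..n}. (LBINT t:P k. g t))"
    unfolding set_lebesgue_integral_def
    by (subst Bochner_Integration.integral_sum) (use piece in \<open>auto simp: set_integrable_def real_scaleR_def\<close>)
  also have "... = (\<Sum>k\<in>{0..n}. (-1)^k * (h (Suc k) - h k))"
    using piece by simp
  also have "... = 2 * (\<Sum>j=1..n. (-1)^(j+1) * h j)"
    unfolding telescope_alt by (simp add: h_def)
  also have "... = 2 * (\<Sum>j=1..n. (-1)^(j+1) * H (ts j))"
    by (simp add: h_def)
  finally show ?thesis unfolding g_def .
qed

fun pk :: "real poly \<Rightarrow> real poly \<Rightarrow> nat \<Rightarrow> nat \<Rightarrow> real poly" where
  "pk Q \<sigma> n 0 = 1"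
| "pk Q \<sigma> n (Suc k) = (\<sigma> + smult (of_nat (n - k)) (pderiv Q)) * pk Q \<sigma> n k + Q * pderiv (pk Q \<sigma> n k)"

lemma pk_alg:
  fixes W s q dq P dP M x :: real
  assumes "q \<noteq> 0"
  shows "(W * s / q * (q * M) + (1 + x) * (dq * M) * W) * P + dP * (W * (q * M))
       = W * M * ((s + (1 + x) * dq) * P + q * dP)"
  using assms by (simp add: field_simps)

lemma pk_step_deriv:
  fixes w :: "real \<Rightarrow> real"
  assumes wd: "(w has_real_derivative w t * poly \<sigma> t / poly Q t) (at t)" and Q0: "poly Q t \<noteq> 0"
  shows "((\<lambda>s. w s * poly Q s ^ Suc m * poly p s) has_real_derivative
          w t * poly Q t ^ m * poly ((\<sigma> + smult (of_nat (Suc m)) (pderiv Q)) * p + Q * pderiv p) t) (at t)"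
proof -
  have d1: "((\<lambda>s. poly Q s ^ Suc m) has_real_derivative (1 + of_nat m) * (poly (pderiv Q) t * poly Q t ^ m)) (at t)"
    by (rule DERIV_power_Suc[OF poly_DERIV])
  have "((\<lambda>s. w s * poly Q s ^ Suc m * poly p s) has_real_derivative
     ((w t * poly \<sigma> t / poly Q t) * poly Q t ^ Suc m + (1 + of_nat m) * (poly (pderiv Q) t * poly Q t ^ m) * w t) * poly p t
     + poly (pderiv p) t * (w t * poly Q t ^ Suc m)) (at t)"
  proof -
    have d2: "((\<lambda>s. w s * poly Q s ^ Suc m) has_real_derivative (w t * poly \<sigma> t / poly Q t) * poly Q t ^ Suc m + (1 + of_nat m) * (poly (pderiv Q) t * poly Q t ^ m) * w t) (at t)"
      by (rule DERIV_mult[OF wd d1])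
    show ?thesis by (rule DERIV_mult[OF d2 poly_DERIV])
  qed
  then show ?thesis
  proof (rule DERIV_cong)
    have e1: "poly ((\<sigma> + smult (of_nat (Suc m)) (pderiv Q)) * p + Q * pderiv p) t
       = (poly \<sigma> t + (1 + real m) * poly (pderiv Q) t) * poly p t + poly Q t * poly (pderiv p) t"
      by simp
    have e2: "poly Q t ^ Suc m = poly Q t * poly Q t ^ m" by simp
    show "((w t * poly \<sigma> t / poly Q t) * poly Q t ^ Suc m + (1 + of_nat m) * (poly (pderiv Q) t * poly Q t ^ m) * w t) * poly p t
     + poly (pderiv p) t * (w t * poly Q t ^ Suc m) =
       w t * poly Q t ^ m * poly ((\<sigma> + smult (of_nat (Suc m)) (pderiv Q)) * p + Q * pderiv p) t"
      unfolding e1 e2 by (rule pk_alg[OF Q0])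
  qed
qed

lemma rodrigues_pk:
  fixes w :: "real \<Rightarrow> real"
  assumes S: "open S"
    and wd: "\<And>t. t \<in> S \<Longrightarrow> (w has_real_derivative w t * poly \<sigma> t / poly Q t) (at t)"
    and Q0: "\<And>t. t \<in> S \<Longrightarrow> poly Q t \<noteq> 0"
  shows "k \<le> n \<Longrightarrow> t \<in> S \<Longrightarrow> (deriv ^^ k) (\<lambda>s. w s * poly Q s ^ n) t = w t * poly Q t ^ (n - k) * poly (pk Q \<sigma> n k) t"
proof (induction k arbitrary: t)
  case 0 then show ?case by simp
next
  case (Suc k)
  define m where "m = n - Suc k"
  have m: "n - k = Suc m" using Suc.prems(1) by (simp add: m_def)
  have nk: "n - Suc k = m" by (simp add: m_def)
  have pkS: "pk Q \<sigma> n (Suc k) = (\<sigma> + smult (of_nat (Suc m)) (pderiv Q)) * pk Q \<sigma> n k + Q * pderiv (pk Q \<sigma> n k)"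
    using m by simp
  have "((\<lambda>s. w s * poly Q s ^ (n - k) * poly (pk Q \<sigma> n k) s) has_real_derivative
          w t * poly Q t ^ m * poly (pk Q \<sigma> n (Suc k)) t) (at t)"
    unfolding m pkS by (rule pk_step_deriv[OF wd[OF Suc.prems(2)] Q0[OF Suc.prems(2)]])
  then have "((deriv ^^ k) (\<lambda>s. w s * poly Q s ^ n) has_real_derivative
          w t * poly Q t ^ m * poly (pk Q \<sigma> n (Suc k)) t) (at t)"
  proof (rule has_field_derivative_transform_within_open[OF _ S Suc.prems(2)])
    fix x assume "x \<in> S"
    then show "w x * poly Q x ^ (n - k) * poly (pk Q \<sigma> n k) x = (deriv ^^ k) (\<lambda>s. w s * poly Q s ^ n) x"
      using Suc.IH[OF Suc_leD[OF Suc.prems(1)]] by simp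
  qed
  then have "deriv ((deriv ^^ k) (\<lambda>s. w s * poly Q s ^ n)) t = w t * poly Q t ^ m * poly (pk Q \<sigma> n (Suc k)) t"
    by (rule DERIV_imp_deriv)
  then show ?case unfolding nk by simp
qed

lemma coeff_mult_le:
  fixes A B :: "real poly"
  assumes "degree A \<le> a" "degree B \<le> b"
  shows "coeff (A * B) (a + b) = coeff A a * coeff B b"
proof -
  have "coeff (A * B) (a + b) = (\<Sum>i\<le>a+b. coeff A i * coeff B (a + b - i))" by (rule coeff_mult)
  also have "... = (\<Sum>i\<le>a+b. if i = a then coeff A a * coeff B b else 0)"
  proof (rule sum.cong)
    fix i assume "i \<in> {..a+b}"
    show "coeff A i * coeff B (a + b - i) = (if i = a then coeff A a * coeff B b else 0)"
    proof (cases "i = a")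
      case False
      then consider "i > a" | "i < a" by linarith
      then show ?thesis
      proof cases
        case 1 then have "coeff A i = 0" using assms by (intro coeff_eq_0) simp
        then show ?thesis using False by simp
      next
        case 2 then have "coeff B (a + b - i) = 0" using assms by (intro coeff_eq_0) simp
        then show ?thesis using False by simp
      qed
    qed simp
  qed simp
  also have "... = coeff A a * coeff B b" by simp
  finally show ?thesis .
qed

lemma pk_degree:
  assumes dS: "degree \<sigma> \<le> 1" and dQ: "degree Q \<le> 2"
    and neg: "\<And>k. k < n \<Longrightarrow> coeff \<sigma> 1 + (2 * real (n - k) + real k) * coeff Q 2 < 0"
  shows "k \<le> n \<Longrightarrow> degree (pk Q \<sigma> n k) = k \<and> (-1)^k * coeff (pk Q \<sigma> n k) k > 0"
proof (induction k)
  case 0 then show ?case by simp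
next
  case (Suc k)
  let ?p = "pk Q \<sigma> n k"
  let ?m = "real (n - k)"
  let ?A = "\<sigma> + smult ?m (pderiv Q)"
  have kn: "k < n" using Suc.prems by simp
  have dp: "degree ?p = k" and cp: "(-1)^k * coeff ?p k > 0" using Suc.IH kn by auto
  have dA: "degree ?A \<le> 1"
  proof -
    have "degree (smult ?m (pderiv Q)) \<le> degree (pderiv Q)" by (rule degree_smult_le)
    then have "degree (smult ?m (pderiv Q)) \<le> 1"
      using dQ degree_pderiv[of Q] by linarith
    then show ?thesis using dS by (intro degree_add_le) auto
  qed
  have cA: "coeff ?A 1 = coeff \<sigma> 1 + ?m * (2 * coeff Q 2)"
    by (simp add: coeff_pderiv numeral_2_eq_2)
  have T: "pk Q \<sigma> n (Suc k) = ?A * ?p + Q * pderiv ?p" by simp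
  have c1: "coeff (?A * ?p) (Suc k) = coeff ?A 1 * coeff ?p k"
    using coeff_mult_le[OF dA, of ?p k] dp by simp
  have c2: "coeff (Q * pderiv ?p) (Suc k) = coeff Q 2 * (real k * coeff ?p k)"
  proof (cases k)
    case 0 then have "pderiv ?p = 0" using dp pderiv_eq_0_iff by blast
    then show ?thesis using 0 by simp
  next
    case (Suc j)
    have "degree (pderiv ?p) \<le> j" using dp Suc degree_pderiv[of ?p] by simp
    then have "coeff (Q * pderiv ?p) (2 + j) = coeff Q 2 * coeff (pderiv ?p) j"
      using coeff_mult_le[OF dQ] by blast
    then show ?thesis using Suc by (simp add: coeff_pderiv)
  qed
  have dT1: "degree (?A * ?p) \<le> Suc k"
    using degree_mult_le[of ?A ?p] dA dp by simp
  have dT2: "degree (Q * pderiv ?p) \<le> Suc k"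
  proof (cases k)
    case 0 then have "pderiv ?p = 0" using dp pderiv_eq_0_iff by blast
    then show ?thesis by simp
  next
    case (Suc j)
    then show ?thesis using degree_mult_le[of Q "pderiv ?p"] dQ dp degree_pderiv[of ?p] by simp
  qed
  have coeffT: "coeff (pk Q \<sigma> n (Suc k)) (Suc k) = (coeff \<sigma> 1 + (2 * ?m + real k) * coeff Q 2) * coeff ?p k"
    unfolding T coeff_add c1 c2 cA by (simp add: algebra_simps coeff_pderiv numeral_2_eq_2)
  have negk: "coeff \<sigma> 1 + (2 * ?m + real k) * coeff Q 2 < 0" using neg[OF kn] .
  have pos: "(-1)^(Suc k) * coeff (pk Q \<sigma> n (Suc k)) (Suc k) > 0"
  proof -
    have "(-1)^(Suc k) * coeff (pk Q \<sigma> n (Suc k)) (Suc k)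
        = (- (coeff \<sigma> 1 + (2 * ?m + real k) * coeff Q 2)) * ((-1)^k * coeff ?p k)"
      unfolding coeffT by (simp add: algebra_simps)
    also have "... > 0" by (rule mult_pos_pos[OF _ cp]) (use negk in linarith)
    finally show ?thesis .
  qed
  have "degree (pk Q \<sigma> n (Suc k)) \<le> Suc k"
    unfolding T using dT1 dT2 by (rule degree_add_le)
  moreover have "Suc k \<le> degree (pk Q \<sigma> n (Suc k))"
    using pos by (intro le_degree) auto
  ultimately have "degree (pk Q \<sigma> n (Suc k)) = Suc k" by (rule antisym)
  then show ?case using pos by (simp only:)
qed

lemma generic_main:
  fixes a b :: ereal and w Qf :: "real \<Rightarrow> real" and Qp \<sigma> :: "real poly" and mu :: "nat \<Rightarrow> real"
    and ts :: "nat \<Rightarrow> real"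
  defines "S \<equiv> einterval a b"
  assumes ab: "a < b" and n: "n \<ge> 1"
    and mono: "strict_mono_on {1..n} ts"
    and zeros: "{t \<in> S. rodrigues w Qf (mu n) n t = 0} = ts ` {1..n}"
    and Qf: "\<And>t. Qf t = poly Qp t"
    and wd: "\<And>t. t \<in> S \<Longrightarrow> (w has_real_derivative w t * poly \<sigma> t / poly Qp t) (at t)"
    and Q0: "\<And>t. t \<in> S \<Longrightarrow> poly Qp t \<noteq> 0"
    and wpos: "\<And>t. t \<in> S \<Longrightarrow> w t > 0"
    and wcont: "\<And>t. t \<in> S \<Longrightarrow> isCont w t"
    and dS: "degree \<sigma> \<le> 1" and dQ: "degree Qp \<le> 2"
    and neg: "\<And>k. k < n \<Longrightarrow> coeff \<sigma> 1 + (2 * real (n - k) + real k) * coeff Qp 2 < 0"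
    and mun: "mu n \<noteq> 0" and mun1: "mu (n - 1) \<noteq> 0"
    and Ha: "(((\<lambda>t. w t * poly Qp t * poly (pk Qp \<sigma> n (n - 1)) t) \<circ> real_of_ereal) \<longlongrightarrow> 0) (at_right a)"
    and Hb: "(((\<lambda>t. w t * poly Qp t * poly (pk Qp \<sigma> n (n - 1)) t) \<circ> real_of_ereal) \<longlongrightarrow> 0) (at_left b)"
  shows "(LBINT t:S. \<bar>rodrigues w Qf (mu n) n t\<bar> * w t)
       = 2 * mu (n - 1) / \<bar>mu n\<bar> *
         (\<Sum>j=1..n. (-1) ^ (j + 1) * w (ts j) * Qf (ts j)
                      * rodrigues (\<lambda>s. w s * Qf s) Qf (mu (n - 1)) (n - 1) (ts j))"
proof -
  let ?P = "pk Qp \<sigma> n n"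
  let ?P' = "pk Qp \<sigma> n (n - 1)"
  let ?H = "\<lambda>t. w t * poly Qp t * poly ?P' t"
  have openS: "open S" unfolding S_def by simp
  have fQ: "(\<lambda>s. w s * Qf s ^ n) = (\<lambda>s. w s * poly Qp s ^ n)" using Qf by simp
  have fQ': "(\<lambda>s. w s * Qf s * Qf s ^ (n - 1)) = (\<lambda>s. w s * poly Qp s ^ n)"
  proof
    fix s
    have "Qf s * Qf s ^ (n - 1) = Qf s ^ n" using n by (metis Suc_diff_1 less_le_trans power_Suc zero_less_one)
    then show "w s * Qf s * Qf s ^ (n - 1) = w s * poly Qp s ^ n" using Qf by (simp add: mult.assoc)
  qed
  have rodP: "rodrigues w Qf (mu n) n t = poly ?P t / mu n" if "t \<in> S" for t
  proof -
    have "(deriv ^^ n) (\<lambda>s. w s * poly Qp s ^ n) t = w t * poly Qp t ^ (n - n) * poly ?P t"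
      by (rule rodrigues_pk[OF openS wd Q0]) (use that in auto)
    then show ?thesis unfolding rodrigues_def fQ using wpos[OF that] by simp
  qed
  have rodP': "rodrigues (\<lambda>s. w s * Qf s) Qf (mu (n - 1)) (n - 1) t = poly ?P' t / mu (n - 1)" if "t \<in> S" for t
  proof -
    have "(deriv ^^ (n - 1)) (\<lambda>s. w s * poly Qp s ^ n) t = w t * poly Qp t ^ (n - (n - 1)) * poly ?P' t"
      by (rule rodrigues_pk[OF openS wd Q0]) (use that in auto)
    moreover have "n - (n - 1) = 1" using n by simp
    ultimately show ?thesis unfolding rodrigues_def fQ' using wpos[OF that] Q0[OF that] Qf by simp
  qed
  have degP: "degree ?P = n \<and> (-1)^n * coeff ?P n > 0"
    by (rule pk_degree[OF dS dQ neg]) auto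
  have zerosP: "{t \<in> S. poly ?P t = 0} = ts ` {1..n}"
  proof -
    have "{t \<in> S. poly ?P t = 0} = {t \<in> S. rodrigues w Qf (mu n) n t = 0}" using rodP mun by auto
    then show ?thesis using zeros by simp
  qed
  have Hder: "(?H has_real_derivative w t * poly ?P t) (at t)" if "t \<in> S" for t
  proof -
    have eqP: "?P = (\<sigma> + smult (of_nat (Suc 0)) (pderiv Qp)) * ?P' + Qp * pderiv ?P'"
    proof -
      have "n = Suc (n - 1)" using n by simp
      then have "?P = pk Qp \<sigma> n (Suc (n - 1))" by simp
      also have "... = (\<sigma> + smult (of_nat (n - (n - 1))) (pderiv Qp)) * ?P' + Qp * pderiv ?P'" by simp
      also have "n - (n - 1) = Suc 0" using n by simp
      finally show ?thesis by simp
    qed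
    have "((\<lambda>s. w s * poly Qp s ^ Suc 0 * poly ?P' s) has_real_derivative
          w t * poly Qp t ^ 0 * poly ((\<sigma> + smult (of_nat (Suc 0)) (pderiv Qp)) * ?P' + Qp * pderiv ?P') t) (at t)"
      by (rule pk_step_deriv[OF wd[OF that] Q0[OF that]])
    then show ?thesis unfolding eqP[symmetric] by simp
  qed
  have int: "(LBINT t:einterval a b. \<bar>poly ?P t\<bar> * w t) = 2 * (\<Sum>j=1..n. (-1)^(j+1) * ?H (ts j))"
    by (rule integral_abs_alternating[OF ab n _ _ mono zerosP[unfolded S_def] wpos[unfolded S_def] wcont[unfolded S_def] Hder[unfolded S_def] Ha Hb])
       (use degP in auto)
  have tsS: "ts j \<in> S" if "j \<in> {1..n}" for j using zeros that by blast
  have "(LBINT t:S. \<bar>rodrigues w Qf (mu n) n t\<bar> * w t) = (LBINT t:S. \<bar>poly ?P t\<bar> * w t / \<bar>mu n\<bar>)"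
    by (rule set_lebesgue_integral_cong) (auto simp: S_def rodP[unfolded S_def] abs_divide)
  also have "... = (LBINT t:S. \<bar>poly ?P t\<bar> * w t) / \<bar>mu n\<bar>" by simp
  also have "... = 2 * (\<Sum>j=1..n. (-1)^(j+1) * ?H (ts j)) / \<bar>mu n\<bar>" using int S_def by simp
  also have "... = 2 * mu (n - 1) / \<bar>mu n\<bar> *
         (\<Sum>j=1..n. (-1) ^ (j + 1) * w (ts j) * Qf (ts j)
                      * rodrigues (\<lambda>s. w s * Qf s) Qf (mu (n - 1)) (n - 1) (ts j))"
  proof -
    have "(\<Sum>j=1..n. (-1) ^ (j + 1) * w (ts j) * Qf (ts j)
                      * rodrigues (\<lambda>s. w s * Qf s) Qf (mu (n - 1)) (n - 1) (ts j))
        = (\<Sum>j=1..n. (-1)^(j+1) * ?H (ts j)) / mu (n - 1)"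
      unfolding sum_divide_distrib
      by (rule sum.cong) (use tsS rodP' Qf in auto)
    then show ?thesis using mun1 by simp
  qed
  finally show ?thesis .
qed

lemma poly_times_tendsto_zero:
  fixes g :: "real \<Rightarrow> real"
  assumes "\<And>i. ((\<lambda>t. t ^ i * g t) \<longlongrightarrow> 0) F"
  shows "((\<lambda>t. poly p t * g t) \<longlongrightarrow> 0) F"
proof -
  have "((\<lambda>t. \<Sum>i\<le>degree p. coeff p i * (t ^ i * g t)) \<longlongrightarrow> (\<Sum>i\<le>degree p. coeff p i * 0)) F"
    by (intro tendsto_sum tendsto_mult tendsto_const assms)
  moreover have "(\<lambda>t. \<Sum>i\<le>degree p. coeff p i * (t ^ i * g t)) = (\<lambda>t. poly p t * g t)"
    by (simp add: poly_altdef sum_distrib_right mult.assoc)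
  ultimately show ?thesis by simp
qed

lemma laguerre_case:
  fixes \<alpha> :: real and n :: nat and ts :: "nat \<Rightarrow> real"
  assumes "cf_valid (Laguerre \<alpha>)"
    and "n \<ge> 1"
    and "strict_mono_on {1..n} ts"
    and "{t \<in> cf_dom (Laguerre \<alpha>). cf_poly (Laguerre \<alpha>) n t = 0} = ts ` {1..n}"
  shows "(LBINT t:cf_dom (Laguerre \<alpha>). \<bar>cf_poly (Laguerre \<alpha>) n t\<bar> * cf_weight (Laguerre \<alpha>) t)
       = 2 * cf_mu (Laguerre \<alpha>) (n - 1) / \<bar>cf_mu (Laguerre \<alpha>) n\<bar> *
         (\<Sum>j=1..n. (-1) ^ (j + 1) * cf_weight (Laguerre \<alpha>) (ts j) * cf_Q (Laguerre \<alpha>) (ts j)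
                      * cf_poly_shift (Laguerre \<alpha>) (n - 1) (ts j))"
proof -
  let ?F = "Laguerre \<alpha>"
  have al: "\<alpha> > -1" using assms(1) by simp
  have dom: "cf_dom ?F = einterval (ereal 0) \<infinity>" by simp
  let ?P' = "pk [:0,1:] [:\<alpha>, -1:] n (n - 1)"
  have cw: "cf_weight ?F = (\<lambda>t. t powr \<alpha> * exp (- t))" by (rule ext) simp
  show ?thesis
    unfolding cf_poly_def cf_poly_shift_def dom
  proof (rule generic_main[where Qp="[:0,1:]" and \<sigma>="[:\<alpha>, -1:]"])
    show "ereal 0 < \<infinity>" by simp
    show "1 \<le> n" by fact
    show "strict_mono_on {1..n} ts" by fact
    show "{t \<in> einterval (ereal 0) \<infinity>. rodrigues (cf_weight ?F) (cf_Q ?F) (cf_mu ?F n) n t = 0} = ts ` {1..n}"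
      using assms(4) unfolding cf_poly_def dom .
    show "\<And>t. cf_Q ?F t = poly [:0,1:] t" by simp
    show "((cf_weight ?F) has_real_derivative cf_weight ?F t * poly [:\<alpha>, -1:] t / poly [:0, 1:] t) (at t)"
      if "t \<in> einterval (ereal 0) \<infinity>" for t
    proof -
      have t: "t > 0" using that by simp
      have "((\<lambda>t. t powr \<alpha> * exp (- t)) has_real_derivative
              \<alpha> * t powr (\<alpha> - 1) * exp (- t) + t powr \<alpha> * (- exp (- t))) (at t)"
        using t by (auto intro!: derivative_eq_intros)
      moreover have "\<alpha> * t powr (\<alpha> - 1) * exp (- t) + t powr \<alpha> * (- exp (- t))
          = t powr \<alpha> * exp (- t) * (\<alpha> + - 1 * t) / t"
        using t by (simp add: powr_diff field_simps)
      ultimately show ?thesis unfolding cw by simp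
    qed
    show "\<And>t. t \<in> einterval (ereal 0) \<infinity> \<Longrightarrow> poly [:0, 1:] t \<noteq> 0" by simp
    show "\<And>t. t \<in> einterval (ereal 0) \<infinity> \<Longrightarrow> cf_weight ?F t > 0" by simp
    show "\<And>t. t \<in> einterval (ereal 0) \<infinity> \<Longrightarrow> isCont (cf_weight ?F) t"
      unfolding cw by (auto intro!: continuous_intros)
    show "degree [:\<alpha>, -1:] \<le> 1" by simp
    show "degree [:0, 1::real:] \<le> 2" by simp
    show "\<And>k. k < n \<Longrightarrow> coeff [:\<alpha>, -1:] 1 + (2 * real (n - k) + real k) * coeff [:0, 1:] 2 < 0"
      by (simp add: numeral_2_eq_2)
    show "cf_mu ?F n \<noteq> 0" by simp
    show "cf_mu ?F (n - 1) \<noteq> 0" by simp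
    show "(((\<lambda>t. cf_weight ?F t * poly [:0, 1:] t * poly ?P' t) \<circ> real_of_ereal) \<longlongrightarrow> 0) (at_right (ereal 0))"
      unfolding ereal_tendsto_simps1
    proof -
      have lim: "((\<lambda>t. t powr (\<alpha> + 1) * (exp (- t) * poly ?P' t)) \<longlongrightarrow> 0 * (exp (- 0) * poly ?P' 0)) (at_right 0)"
      proof (rule tendsto_mult)
        have id0: "((\<lambda>t::real. t) \<longlongrightarrow> 0) (at_right 0)" by (rule tendsto_ident_at)
        show "((\<lambda>t. t powr (\<alpha> + 1)) \<longlongrightarrow> 0) (at_right 0)"
          by (rule tendsto_zero_powrI[OF id0 tendsto_const])
             (use al eventually_at_right_less[of "0::real"] in \<open>auto elim: eventually_mono\<close>)
        show "((\<lambda>t. exp (- t) * poly ?P' t) \<longlongrightarrow> exp (- 0) * poly ?P' 0) (at_right 0)"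
          by (intro tendsto_intros id0)
      qed
      have ev: "\<forall>\<^sub>F t in at_right 0. t powr (\<alpha> + 1) * (exp (- t) * poly ?P' t) = cf_weight ?F t * poly [:0, 1:] t * poly ?P' t"
        using eventually_at_right_less[of 0] by eventually_elim (simp add: powr_add)
      show "((\<lambda>t. cf_weight ?F t * poly [:0, 1:] t * poly ?P' t) \<longlongrightarrow> 0) (at_right 0)"
        using tendsto_cong[OF ev] lim by simp
    qed
    show "(((\<lambda>t. cf_weight ?F t * poly [:0, 1:] t * poly ?P' t) \<circ> real_of_ereal) \<longlongrightarrow> 0) (at_left \<infinity>)"
      unfolding ereal_tendsto_simps1
    proof -
      have "((\<lambda>t. poly ?P' t * (t powr \<alpha> * t * exp (- t))) \<longlongrightarrow> 0) at_top"
      proof (rule poly_times_tendsto_zero)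
        fix i :: nat
        show "((\<lambda>t::real. t ^ i * (t powr \<alpha> * t * exp (- t))) \<longlongrightarrow> 0) at_top" by real_asymp
      qed
      then show "((\<lambda>t. cf_weight ?F t * poly [:0, 1:] t * poly ?P' t) \<longlongrightarrow> 0) at_top"
        by (simp add: algebra_simps)
    qed
  qed
qed

lemma hermite_case:
  fixes n :: nat and ts :: "nat \<Rightarrow> real"
  assumes "n \<ge> 1"
    and "strict_mono_on {1..n} ts"
    and "{t \<in> cf_dom Hermite. cf_poly Hermite n t = 0} = ts ` {1..n}"
  shows "(LBINT t:cf_dom Hermite. \<bar>cf_poly Hermite n t\<bar> * cf_weight Hermite t)
       = 2 * cf_mu Hermite (n - 1) / \<bar>cf_mu Hermite n\<bar> *
         (\<Sum>j=1..n. (-1) ^ (j + 1) * cf_weight Hermite (ts j) * cf_Q Hermite (ts j)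
                      * cf_poly_shift Hermite (n - 1) (ts j))"
proof -
  let ?F = "Hermite"
  have dom: "cf_dom ?F = einterval (-\<infinity>) \<infinity>" by simp
  let ?P' = "pk [:1:] [:0, -2:] n (n - 1)"
  have cw: "cf_weight ?F = (\<lambda>t. exp (- (t ^ 2)))" by (rule ext) simp
  show ?thesis
    unfolding cf_poly_def cf_poly_shift_def dom
  proof (rule generic_main[where Qp="[:1:]" and \<sigma>="[:0, -2:]"])
    show "- \<infinity> < (\<infinity>::ereal)" by simp
    show "1 \<le> n" by fact
    show "strict_mono_on {1..n} ts" by fact
    show "{t \<in> einterval (-\<infinity>) \<infinity>. rodrigues (cf_weight ?F) (cf_Q ?F) (cf_mu ?F n) n t = 0} = ts ` {1..n}"
      using assms(3) unfolding cf_poly_def dom .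
    show "\<And>t. cf_Q ?F t = poly [:1:] t" by simp
    show "((cf_weight ?F) has_real_derivative cf_weight ?F t * poly [:0, -2:] t / poly [:1:] t) (at t)"
      if "t \<in> einterval (-\<infinity>) \<infinity>" for t
    proof -
      have "((\<lambda>t. exp (- (t ^ 2))) has_real_derivative exp (- (t ^ 2)) * (- (2 * t))) (at t)"
        by (auto intro!: derivative_eq_intros)
      moreover have "exp (- (t ^ 2)) * (- (2 * t)) = cf_weight ?F t * poly [:0, -2:] t / poly [:1:] t"
        by simp
      ultimately show ?thesis unfolding cw by (simp only:)
    qed
    show "\<And>t. t \<in> einterval (-\<infinity>) \<infinity> \<Longrightarrow> poly [:1:] t \<noteq> 0" by simp
    show "\<And>t. t \<in> einterval (-\<infinity>) \<infinity> \<Longrightarrow> cf_weight ?F t > 0" by simp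
    show "\<And>t. t \<in> einterval (-\<infinity>) \<infinity> \<Longrightarrow> isCont (cf_weight ?F) t"
      unfolding cw by (auto intro!: continuous_intros)
    show "degree [:0, -2::real:] \<le> 1" by simp
    show "degree [:1::real:] \<le> 2" by simp
    show "\<And>k. k < n \<Longrightarrow> coeff [:0, -2:] 1 + (2 * real (n - k) + real k) * coeff [:1:] 2 < 0"
      by (simp add: numeral_2_eq_2)
    show "cf_mu ?F n \<noteq> 0" by simp
    show "cf_mu ?F (n - 1) \<noteq> 0" by simp
    show "(((\<lambda>t. cf_weight ?F t * poly [:1:] t * poly ?P' t) \<circ> real_of_ereal) \<longlongrightarrow> 0) (at_right (-\<infinity>))"
      unfolding ereal_tendsto_simps1
    proof -
      have "((\<lambda>t. poly ?P' t * exp (- (t ^ 2))) \<longlongrightarrow> 0) at_bot"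
      proof (rule poly_times_tendsto_zero)
        fix i :: nat
        show "((\<lambda>t::real. t ^ i * exp (- (t ^ 2))) \<longlongrightarrow> 0) at_bot" by real_asymp
      qed
      then show "((\<lambda>t. cf_weight ?F t * poly [:1:] t * poly ?P' t) \<longlongrightarrow> 0) at_bot"
        by (simp add: algebra_simps)
    qed
    show "(((\<lambda>t. cf_weight ?F t * poly [:1:] t * poly ?P' t) \<circ> real_of_ereal) \<longlongrightarrow> 0) (at_left \<infinity>)"
      unfolding ereal_tendsto_simps1
    proof -
      have "((\<lambda>t. poly ?P' t * exp (- (t ^ 2))) \<longlongrightarrow> 0) at_top"
      proof (rule poly_times_tendsto_zero)
        fix i :: nat
        show "((\<lambda>t::real. t ^ i * exp (- (t ^ 2))) \<longlongrightarrow> 0) at_top" by real_asymp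
      qed
      then show "((\<lambda>t. cf_weight ?F t * poly [:1:] t * poly ?P' t) \<longlongrightarrow> 0) at_top"
        by (simp add: algebra_simps)
    qed
  qed
qed

lemma jacobi_alg:
  fixes a b A B x y :: real
  assumes "x > 0" "y > 0"
  shows "a * (A / x) * (- 1) * B + A * (b * (B / y) * 1) = A * B * (b * x - a * y) / (x * y)"
  using assms by (simp add: field_simps)

lemma jacobi_case:
  fixes \<alpha> \<beta> :: real and n :: nat and ts :: "nat \<Rightarrow> real"
  assumes "cf_valid (Jacobi \<alpha> \<beta>)"
    and "n \<ge> 1"
    and "strict_mono_on {1..n} ts"
    and "{t \<in> cf_dom (Jacobi \<alpha> \<beta>). cf_poly (Jacobi \<alpha> \<beta>) n t = 0} = ts ` {1..n}"
  shows "(LBINT t:cf_dom (Jacobi \<alpha> \<beta>). \<bar>cf_poly (Jacobi \<alpha> \<beta>) n t\<bar> * cf_weight (Jacobi \<alpha> \<beta>) t)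
       = 2 * cf_mu (Jacobi \<alpha> \<beta>) (n - 1) / \<bar>cf_mu (Jacobi \<alpha> \<beta>) n\<bar> *
         (\<Sum>j=1..n. (-1) ^ (j + 1) * cf_weight (Jacobi \<alpha> \<beta>) (ts j) * cf_Q (Jacobi \<alpha> \<beta>) (ts j)
                      * cf_poly_shift (Jacobi \<alpha> \<beta>) (n - 1) (ts j))"
proof -
  let ?F = "Jacobi \<alpha> \<beta>"
  have al: "\<alpha> > -1" and be: "\<beta> > -1" using assms(1) by auto
  have dom: "cf_dom ?F = einterval (ereal (-1)) (ereal 1)" by simp
  let ?Q = "[:1, 0, -1:] :: real poly"
  let ?s = "[:\<beta> - \<alpha>, -(\<alpha> + \<beta>):]"
  let ?P' = "pk ?Q ?s n (n - 1)"
  have cw: "cf_weight ?F = (\<lambda>t. (1 - t) powr \<alpha> * (1 + t) powr \<beta>)" by (rule ext) simp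
  have pQ: "poly ?Q t = (1 - t) * (1 + t)" for t by (simp add: algebra_simps)
  have ps: "poly ?s t = \<beta> * (1 - t) - \<alpha> * (1 + t)" for t by (simp add: algebra_simps)
  have evR: "\<forall>\<^sub>F x in at_right (-1). x \<in> {-1<..<(1::real)}" by (rule eventually_at_right_real) simp
  have evL: "\<forall>\<^sub>F x in at_left 1. x \<in> {-1<..<(1::real)}" by (rule eventually_at_left_real) simp
  show ?thesis
    unfolding cf_poly_def cf_poly_shift_def dom
  proof (rule generic_main[where Qp="?Q" and \<sigma>="?s"])
    show "ereal (-1) < ereal 1" by simp
    show "1 \<le> n" by fact
    show "strict_mono_on {1..n} ts" by fact
    show "{t \<in> einterval (ereal (-1)) (ereal 1). rodrigues (cf_weight ?F) (cf_Q ?F) (cf_mu ?F n) n t = 0} = ts ` {1..n}"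
      using assms(4) unfolding cf_poly_def dom .
    show "\<And>t. cf_Q ?F t = poly ?Q t" by (simp add: power2_eq_square)
    show "((cf_weight ?F) has_real_derivative cf_weight ?F t * poly ?s t / poly ?Q t) (at t)"
      if "t \<in> einterval (ereal (-1)) (ereal 1)" for t
    proof -
      have t1: "1 - t > 0" and t2: "1 + t > 0" using that unfolding einterval_eq_Icc by auto
      have d1: "((\<lambda>t. (1 - t) powr \<alpha>) has_real_derivative \<alpha> * (1 - t) powr (\<alpha> - of_nat 1) * (- 1)) (at t)"
        by (rule DERIV_fun_powr[where g="\<lambda>t. 1 - t" and x=t, OF _ t1]) (auto intro!: derivative_eq_intros)
      have d2: "((\<lambda>t. (1 + t) powr \<beta>) has_real_derivative \<beta> * (1 + t) powr (\<beta> - of_nat 1) * 1) (at t)"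
        by (rule DERIV_fun_powr[where g="\<lambda>t. 1 + t" and x=t, OF _ t2]) (auto intro!: derivative_eq_intros)
      have "((\<lambda>t. (1 - t) powr \<alpha> * (1 + t) powr \<beta>) has_real_derivative
          \<alpha> * (1 - t) powr (\<alpha> - of_nat 1) * (- 1) * (1 + t) powr \<beta> + \<beta> * (1 + t) powr (\<beta> - of_nat 1) * 1 * (1 - t) powr \<alpha>) (at t)"
        by (rule DERIV_mult[OF d1 d2])
      moreover have "\<alpha> * (1 - t) powr (\<alpha> - of_nat 1) * (- 1) * (1 + t) powr \<beta> + \<beta> * (1 + t) powr (\<beta> - of_nat 1) * 1 * (1 - t) powr \<alpha>
          = cf_weight ?F t * poly ?s t / poly ?Q t"
      proof -
        have "(1 - t) powr (\<alpha> - of_nat 1) = (1 - t) powr \<alpha> / (1 - t)"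
          using t1 by (simp add: powr_diff)
        moreover have "(1 + t) powr (\<beta> - of_nat 1) = (1 + t) powr \<beta> / (1 + t)"
          using t2 by (simp add: powr_diff)
        ultimately show ?thesis
          unfolding pQ ps cw using jacobi_alg[OF t1 t2, of \<alpha> "(1 - t) powr \<alpha>" "(1 + t) powr \<beta>" \<beta>]
          by (simp add: algebra_simps)
      qed
      ultimately show ?thesis unfolding cw by (simp only:)
    qed
    show "\<And>t. t \<in> einterval (ereal (-1)) (ereal 1) \<Longrightarrow> poly ?Q t \<noteq> 0"
      unfolding pQ einterval_eq_Icc by auto
    show "\<And>t. t \<in> einterval (ereal (-1)) (ereal 1) \<Longrightarrow> cf_weight ?F t > 0" unfolding einterval_eq_Icc by auto
    show "\<And>t. t \<in> einterval (ereal (-1)) (ereal 1) \<Longrightarrow> isCont (cf_weight ?F) t"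
      unfolding cw einterval_eq_Icc by (auto intro!: continuous_intros)
    show "degree ?s \<le> 1" by simp
    show "degree ?Q \<le> 2" by simp
    show "coeff ?s 1 + (2 * real (n - k) + real k) * coeff ?Q 2 < 0" if "k < n" for k
    proof -
      have "2 * real (n - k) + real k \<ge> 2" using that by linarith
      then show ?thesis using al be by (simp add: numeral_2_eq_2)
    qed
    show "cf_mu ?F n \<noteq> 0" by simp
    show "cf_mu ?F (n - 1) \<noteq> 0" by simp
    show "(((\<lambda>t. cf_weight ?F t * poly ?Q t * poly ?P' t) \<circ> real_of_ereal) \<longlongrightarrow> 0) (at_right (ereal (-1)))"
      unfolding ereal_tendsto_simps1
    proof -
      have lim: "((\<lambda>t. (1 + t) powr (\<beta> + 1) * ((1 - t) powr \<alpha> * (1 - t) * poly ?P' t))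
                 \<longlongrightarrow> 0 * ((1 - (-1)) powr \<alpha> * (1 - (-1)) * poly ?P' (-1))) (at_right (-1))"
      proof (rule tendsto_mult)
        have id0: "((\<lambda>t::real. t) \<longlongrightarrow> -1) (at_right (-1))" by (rule tendsto_ident_at)
        have "((\<lambda>t::real. 1 + t) \<longlongrightarrow> 1 + (-1)) (at_right (-1))" by (intro tendsto_intros id0)
        then have l0: "((\<lambda>t::real. 1 + t) \<longlongrightarrow> 0) (at_right (-1))" by simp
        show "((\<lambda>t. (1 + t) powr (\<beta> + 1)) \<longlongrightarrow> 0) (at_right (-1))"
          by (rule tendsto_zero_powrI[OF l0 tendsto_const])
             (use be eventually_at_right_less[of "-1::real"] in \<open>auto elim: eventually_mono\<close>)
        show "((\<lambda>t. (1 - t) powr \<alpha> * (1 - t) * poly ?P' t) \<longlongrightarrow> (1 - (-1)) powr \<alpha> * (1 - (-1)) * poly ?P' (-1)) (at_right (-1))"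
          by (intro tendsto_intros id0) simp
      qed
      have ev: "\<forall>\<^sub>F t in at_right (-1). (1 + t) powr (\<beta> + 1) * ((1 - t) powr \<alpha> * (1 - t) * poly ?P' t)
                  = cf_weight ?F t * poly ?Q t * poly ?P' t"
        using evR
        by eventually_elim (simp add: powr_add pQ algebra_simps)
      show "((\<lambda>t. cf_weight ?F t * poly ?Q t * poly ?P' t) \<longlongrightarrow> 0) (at_right (-1))"
        using tendsto_cong[OF ev] lim by simp
    qed
    show "(((\<lambda>t. cf_weight ?F t * poly ?Q t * poly ?P' t) \<circ> real_of_ereal) \<longlongrightarrow> 0) (at_left (ereal 1))"
      unfolding ereal_tendsto_simps1
    proof -
      have lim: "((\<lambda>t. (1 - t) powr (\<alpha> + 1) * ((1 + t) powr \<beta> * (1 + t) * poly ?P' t))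
                 \<longlongrightarrow> 0 * ((1 + 1) powr \<beta> * (1 + 1) * poly ?P' 1)) (at_left 1)"
      proof (rule tendsto_mult)
        have id0: "((\<lambda>t::real. t) \<longlongrightarrow> 1) (at_left 1)" by (rule tendsto_ident_at)
        have "((\<lambda>t::real. 1 - t) \<longlongrightarrow> 1 - 1) (at_left 1)" by (intro tendsto_intros id0)
        then have l0: "((\<lambda>t::real. 1 - t) \<longlongrightarrow> 0) (at_left 1)" by simp
        show "((\<lambda>t. (1 - t) powr (\<alpha> + 1)) \<longlongrightarrow> 0) (at_left 1)"
          by (rule tendsto_zero_powrI[OF l0 tendsto_const])
             (use al evL in \<open>auto elim: eventually_mono\<close>)
        show "((\<lambda>t. (1 + t) powr \<beta> * (1 + t) * poly ?P' t) \<longlongrightarrow> (1 + 1) powr \<beta> * (1 + 1) * poly ?P' 1) (at_left 1)"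
          by (intro tendsto_intros id0) simp
      qed
      have ev: "\<forall>\<^sub>F t in at_left 1. (1 - t) powr (\<alpha> + 1) * ((1 + t) powr \<beta> * (1 + t) * poly ?P' t)
                  = cf_weight ?F t * poly ?Q t * poly ?P' t"
        using evL
        by eventually_elim (simp add: powr_add pQ algebra_simps)
      show "((\<lambda>t. cf_weight ?F t * poly ?Q t * poly ?P' t) \<longlongrightarrow> 0) (at_left 1)"
        using tendsto_cong[OF ev] lim by simp
    qed
  qed
qed

theorem theorem1p1:
  fixes F :: cfamily and n :: nat and ts :: "nat \<Rightarrow> real"
  assumes "cf_valid F"
    and "n \<ge> 1"
    and "strict_mono_on {1..n} ts"
    and "{t \<in> cf_dom F. cf_poly F n t = 0} = ts ` {1..n}"
  shows "(LBINT t:cf_dom F. \<bar>cf_poly F n t\<bar> * cf_weight F t)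
       = 2 * cf_mu F (n - 1) / \<bar>cf_mu F n\<bar> *
         (\<Sum>j=1..n. (-1) ^ (j + 1) * cf_weight F (ts j) * cf_Q F (ts j)
                      * cf_poly_shift F (n - 1) (ts j))"
proof (cases F)
  case (Laguerre \<alpha>)
  show ?thesis using assms unfolding Laguerre by (rule laguerre_case)
next
  case Hermite
  show ?thesis using assms(2-4) unfolding Hermite by (rule hermite_case)
next
  case (Jacobi \<alpha> \<beta>)
  show ?thesis using assms unfolding Jacobi by (rule jacobi_case)
qed

end
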